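(* Let $G$ be an abelian group (written multiplicatively) and let $C$ be a finite Sidon subset of $G$. If $A,B$ are (nonempty) subsets of $G$ with $AB\subset C$, then $|AB|\geq |A|+|B|-1$.
   Context: $AB=\{ab: a\in A, b\in B\}$. A subset $C\subset G$ is a Sidon subset if the equation $ab=cd$ with $a,b,c,d\in C$ has only the trivial solutions $\{a,b\}=\{c,d\}$. *)

theory Defs
  imports "HOL-Algebra.Group"
begin

definition set_mult :: "('a, 'b) monoid_scheme \<Rightarrow> 'a set \<Rightarrow> 'a set \<Rightarrow> 'a set" where
  "set_mult G A B = {a \<otimes>\<^bsub>G\<^esub> b | a b. a \<in> A \<and> b \<in> B}"

definition sidon :: "('a, 'b) monoid_scheme \<Rightarrow> 'a set \<Rightarrow> bool" where
  "sidon G C \<longleftrightarrow> C \<subseteq> carrier G \<and>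
     (\<forall>a\<in>C. \<forall>b\<in>C. \<forall>c\<in>C. \<forall>d\<in>C.
        a \<otimes>\<^bsub>G\<^esub> b = c \<otimes>\<^bsub>G\<^esub> d \<longrightarrow> {a, b} = {c, d})"

end

theory Submission
  imports Defs
begin

theorem corollary2p8:
  fixes G :: "('a, 'b) monoid_scheme" and A B C :: "'a set"
  assumes "comm_group G"
    and "finite C" and "sidon G C"
    and "A \<subseteq> carrier G" and "B \<subseteq> carrier G"
    and "A \<noteq> {}" and "B \<noteq> {}"
    and "set_mult G A B \<subseteq> C"
  shows "card (set_mult G A B) + 1 \<ge> card A + card B"
proof -
  interpret comm_group G by (rule assms(1))
  have mem: "a \<otimes>\<^bsub>G\<^esub> b \<in> C" if "a \<in> A" "b \<in> B" for a b
    using assms(8) that unfolding set_mult_def by blast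
  have sid: "\<And>x y u v. x \<in> C \<Longrightarrow> y \<in> C \<Longrightarrow> u \<in> C \<Longrightarrow> v \<in> C \<Longrightarrow> x \<otimes>\<^bsub>G\<^esub> y = u \<otimes>\<^bsub>G\<^esub> v \<Longrightarrow> {x, y} = {u, v}"
    using assms(3) unfolding sidon_def by blast
  show ?thesis
  proof (cases "\<exists>a. A = {a}")
    case True
    then obtain a where a: "A = {a}" by blast
    have aG: "a \<in> carrier G" using a assms(4) by auto
    have "set_mult G A B = (\<lambda>b. a \<otimes>\<^bsub>G\<^esub> b) ` B" unfolding set_mult_def a by auto
    moreover have "inj_on (\<lambda>b. a \<otimes>\<^bsub>G\<^esub> b) B"
      by (rule inj_onI) (metis Units_eq Units_l_cancel aG assms(5) subsetD)
    ultimately have "card (set_mult G A B) = card B" by (simp add: card_image)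
    then show ?thesis using a by simp
  next
    case nA: False
    show ?thesis
    proof (cases "\<exists>b. B = {b}")
      case True
      then obtain b where b: "B = {b}" by blast
      have bG: "b \<in> carrier G" using b assms(5) by auto
      have "set_mult G A B = (\<lambda>a. a \<otimes>\<^bsub>G\<^esub> b) ` A" unfolding set_mult_def b by auto
      moreover have "inj_on (\<lambda>a. a \<otimes>\<^bsub>G\<^esub> b) A"
        by (rule inj_onI) (metis right_cancel bG assms(4) subsetD)
      ultimately have "card (set_mult G A B) = card A" by (simp add: card_image)
      then show ?thesis using b by simp
    next
      case nB: False
      obtain a a' where aa: "a \<in> A" "a' \<in> A" "a \<noteq> a'"
        using nA assms(6) by blast
      obtain b b' where bb: "b \<in> B" "b' \<in> B" "b \<noteq> b'"
        using nB assms(7) by blast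
      have G: "a \<in> carrier G" "a' \<in> carrier G" "b \<in> carrier G" "b' \<in> carrier G"
        using aa bb assms(4,5) by auto
      have "(a \<otimes>\<^bsub>G\<^esub> b) \<otimes>\<^bsub>G\<^esub> (a' \<otimes>\<^bsub>G\<^esub> b') = (a \<otimes>\<^bsub>G\<^esub> b') \<otimes>\<^bsub>G\<^esub> (a' \<otimes>\<^bsub>G\<^esub> b)"
        using G by (metis m_assoc m_comm m_closed)
      then have eq: "{a \<otimes>\<^bsub>G\<^esub> b, a' \<otimes>\<^bsub>G\<^esub> b'} = {a \<otimes>\<^bsub>G\<^esub> b', a' \<otimes>\<^bsub>G\<^esub> b}"
        using sid mem aa bb by blast
      have n1: "a \<otimes>\<^bsub>G\<^esub> b \<noteq> a \<otimes>\<^bsub>G\<^esub> b'" using G bb by (metis Units_eq Units_l_cancel)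
      have n2: "a \<otimes>\<^bsub>G\<^esub> b \<noteq> a' \<otimes>\<^bsub>G\<^esub> b" using G aa by (metis right_cancel)
      have False using eq n1 n2 by (auto simp: doubleton_eq_iff)
      then show ?thesis ..
    qed
  qed
qed

end
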